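(* Let $G$ be a connected graph with $n\geq 2$ vertices and $m$ edges, and let $T(G)$ be its triangulation. Then $$R^+(T(G))=2R^+(G)+2R^*(G)+\frac{12m^2-mn-n^2-2m+n}{3}.$$
   Context: All graphs are finite, undirected, without loops or multiple edges. For a connected graph $H$ and vertices $i,j$, the resistance distance $\Omega_{ij}$ is the effective resistance between $i$ and $j$ in the electrical network obtained from $H$ by replacing each edge by a unit resistor. With $d_i$ the degree of vertex $i$ in $H$ and sums over unordered pairs of distinct vertices of $H$: $R^+(H)=\sum_{\{i,j\}\subseteq V(H)}(d_i+d_j)\Omega_{ij}$ (additive degree-Kirchhoff index) and $R^*(H)=\sum_{\{i,j\}\subseteq V(H)}d_id_j\Omega_{ij}$ (multiplicative degree-Kirchhoff index), with degrees and resistances taken in $H$. The triangulation $T(G)$ is obtained from $G$ by adding, for each edge $uv$, a new vertex $w$ adjacent to both $u$ and $v$ (keeping the edge $uv$). *)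

theory Defs
  imports Complex_Main
begin

definition simple_graph :: "'a set \<Rightarrow> 'a set set \<Rightarrow> bool" where
  "simple_graph V E \<longleftrightarrow> finite V \<and> (\<forall>e\<in>E. card e = 2 \<and> e \<subseteq> V)"

definition graph_connected :: "'a set \<Rightarrow> 'a set set \<Rightarrow> bool" where
  "graph_connected V E \<longleftrightarrow>
     (\<forall>u\<in>V. \<forall>v\<in>V. (\<lambda>x y. {x, y} \<in> E)\<^sup>*\<^sup>* u v)"

definition degree :: "'a set set \<Rightarrow> 'a \<Rightarrow> nat" where
  "degree E v = card {e \<in> E. v \<in> e}"

text \<open>Effective resistance: inject a unit current at i and extract it at j
  (Kirchhoff's current law with unit resistors, i.e. L x = e_i - e_j);
  the resistance is the resulting potential difference x i - x j.\<close>
definition resistance :: "'a set \<Rightarrow> 'a set set \<Rightarrow> 'a \<Rightarrow> 'a \<Rightarrow> real" where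
  "resistance V E i j = (THE r. \<exists>x :: 'a \<Rightarrow> real.
      (\<forall>v\<in>V. (\<Sum>u\<in>{u\<in>V. {u, v} \<in> E}. x v - x u)
              = (if v = i then 1 else 0) - (if v = j then 1 else 0))
      \<and> r = x i - x j)"

text \<open>Sums over unordered pairs of distinct vertices, written as half the
  sum over ordered pairs of distinct vertices.\<close>
definition Rplus :: "'a set \<Rightarrow> 'a set set \<Rightarrow> real" where
  "Rplus V E = (\<Sum>i\<in>V. \<Sum>j\<in>V - {i}.
      (real (degree E i) + real (degree E j)) * resistance V E i j) / 2"

definition Rstar :: "'a set \<Rightarrow> 'a set set \<Rightarrow> real" where
  "Rstar V E = (\<Sum>i\<in>V. \<Sum>j\<in>V - {i}.
      (real (degree E i) * real (degree E j)) * resistance V E i j) / 2"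

text \<open>Triangulation: old vertices Inl v, one new vertex Inr e per edge e.\<close>
definition tri_V :: "'a set \<Rightarrow> 'a set set \<Rightarrow> ('a + 'a set) set" where
  "tri_V V E = Inl ` V \<union> Inr ` E"

definition tri_E :: "'a set \<Rightarrow> 'a set set \<Rightarrow> ('a + 'a set) set set" where
  "tri_E V E = (\<lambda>e. Inl ` e) ` E \<union> {{Inl u, Inr e} | u e. e \<in> E \<and> u \<in> e}"

end

theory Submission
  imports Defs "Jordan_Normal_Form.Determinant"
begin

lemma inj_imp_surj_fin:
  fixes A :: "'a \<Rightarrow> 'a \<Rightarrow> real"
  assumes fin: "finite V"
    and inj: "\<And>x. \<forall>v\<in>V. (\<Sum>u\<in>V. A v u * x u) = 0 \<Longrightarrow> \<forall>u\<in>V. x u = 0"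
  shows "\<exists>x. \<forall>v\<in>V. (\<Sum>u\<in>V. A v u * x u) = b v"
proof -
  define n where "n = card V"
  obtain f where f: "bij_betw f {0..<n} V"
    using ex_bij_betw_nat_finite[OF fin] n_def by blast
  define M where "M = mat n n (\<lambda>(i,j). A (f i) (f j))"
  have Mc: "M \<in> carrier_mat n n" by (simp add: M_def)
  define g where "g = inv_into {0..<n} f"
  have fg: "\<And>u. u \<in> V \<Longrightarrow> f (g u) = u" "\<And>u. u \<in> V \<Longrightarrow> g u < n"
    using f unfolding g_def
    by (auto simp: bij_betw_inv_into_right bij_betw_def inv_into_into)
  have gf: "\<And>i. i < n \<Longrightarrow> g (f i) = i"
    using f unfolding g_def by (simp add: bij_betw_inv_into_left)
  have reidx: "\<And>h. (\<Sum>u\<in>V. h u) = (\<Sum>j\<in>{0..<n}. h (f j))"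
    using f by (metis sum.reindex_bij_betw)
  have MV: "\<And>i v. i < n \<Longrightarrow> v \<in> carrier_vec n \<Longrightarrow>
     (M *\<^sub>v v) $ i = (\<Sum>u\<in>V. A (f i) u * v $ (g u))"
    by (simp add: M_def scalar_prod_def reidx gf)
  have "det M \<noteq> 0"
  proof
    assume "det M = 0"
    then obtain v where v: "v \<in> carrier_vec n" "v \<noteq> 0\<^sub>v n" "M *\<^sub>v v = 0\<^sub>v n"
      using det_0_iff_vec_prod_zero_field[OF Mc] by blast
    have "\<forall>w\<in>V. (\<Sum>u\<in>V. A w u * v $ (g u)) = 0"
    proof
      fix w assume w: "w \<in> V"
      have "(M *\<^sub>v v) $ (g w) = 0" using v(3) fg(2)[OF w] by simp
      thus "(\<Sum>u\<in>V. A w u * v $ (g u)) = 0" using MV[OF fg(2)[OF w] v(1)] fg(1)[OF w] by simp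
    qed
    from inj[OF this] have "\<forall>u\<in>V. v $ (g u) = 0" .
    hence "\<And>i. i < n \<Longrightarrow> v $ i = 0"
      using gf f by (metis atLeastLessThan_iff bij_betwE zero_le)
    hence "v = 0\<^sub>v n" using v(1) by (intro eq_vecI) auto
    with v(2) show False by simp
  qed
  from det_non_zero_imp_unit[OF Mc this, of "()"]
  obtain B where B: "B \<in> carrier_mat n n" "M * B = 1\<^sub>m n"
    unfolding Units_def by (auto simp: ring_mat_def)
  define bv where "bv = vec n (\<lambda>i. b (f i))"
  define y where "y = B *\<^sub>v bv"
  have yc: "y \<in> carrier_vec n" using B by (simp add: y_def bv_def)
  have My: "M *\<^sub>v y = bv"
    unfolding y_def using B Mc
    by (metis assoc_mult_mat_vec bv_def one_mult_mat_vec vec_carrier)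
  show ?thesis
  proof (intro exI ballI)
    fix w assume w: "w \<in> V"
    have "(\<Sum>u\<in>V. A w u * y $ (g u)) = (M *\<^sub>v y) $ (g w)"
      using MV[OF fg(2)[OF w] yc] fg(1)[OF w] by simp
    also have "\<dots> = b w" using My fg[OF w] by (simp add: bv_def)
    finally show "(\<Sum>u\<in>V. A w u * (\<lambda>u. y $ g u) u) = b w" by simp
  qed
qed



definition nbrs :: "'a set \<Rightarrow> 'a set set \<Rightarrow> 'a \<Rightarrow> 'a set" where
  "nbrs V E v = {u\<in>V. {u, v} \<in> E}"
definition lap :: "'a set \<Rightarrow> 'a set set \<Rightarrow> ('a \<Rightarrow> real) \<Rightarrow> 'a \<Rightarrow> real" where
  "lap V E x v = (\<Sum>u\<in>nbrs V E v. x v - x u)"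

lemma sg_finite: "simple_graph V E \<Longrightarrow> finite V" by (simp add: simple_graph_def)
lemma sg_edge: "simple_graph V E \<Longrightarrow> e \<in> E \<Longrightarrow> card e = 2 \<and> e \<subseteq> V"
  by (simp add: simple_graph_def)
lemma sg_finE: "simple_graph V E \<Longrightarrow> finite E"
  by (metis (no_types, lifting) Pow_iff finite_Pow_iff rev_finite_subset sg_edge sg_finite subsetI)
lemma sg_pair: "simple_graph V E \<Longrightarrow> {u, v} \<in> E \<Longrightarrow> u \<noteq> v \<and> u \<in> V \<and> v \<in> V"
  using sg_edge[of V E "{u,v}"] by (cases "u = v") auto
lemma nbrs_fin: "simple_graph V E \<Longrightarrow> finite (nbrs V E v)"
  unfolding nbrs_def by (auto dest: sg_finite)

lemma nbrs_sum_swap: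
  assumes "simple_graph V E"
  shows "(\<Sum>p\<in>V. \<Sum>u\<in>nbrs V E p. F p u) = (\<Sum>p\<in>V. \<Sum>u\<in>nbrs V E p. F u p)"
proof -
  have fin: "finite V" using assms sg_finite by blast
  have ind: "\<And>G p. (\<Sum>u\<in>nbrs V E p. G p u) = (\<Sum>u\<in>V. if {u,p} \<in> E then G p u else 0)"
    unfolding nbrs_def using fin by (simp add: sum.inter_filter)
  have "(\<Sum>p\<in>V. \<Sum>u\<in>V. if {u,p} \<in> E then F p u else 0)
      = (\<Sum>u\<in>V. \<Sum>p\<in>V. if {u,p} \<in> E then F p u else 0)" by (rule sum.swap)
  also have "\<dots> = (\<Sum>u\<in>V. \<Sum>p\<in>V. if {p,u} \<in> E then F p u else 0)"
    by (simp add: insert_commute)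
  finally show ?thesis using ind[of F] ind[of "\<lambda>p u. F u p"] by simp
qed

lemma lap_sum_zero:
  assumes "simple_graph V E"
  shows "(\<Sum>v\<in>V. lap V E x v) = 0"
proof -
  have "(\<Sum>v\<in>V. lap V E x v) = (\<Sum>p\<in>V. \<Sum>u\<in>nbrs V E p. x p - x u)" by (simp add: lap_def)
  also have "\<dots> = (\<Sum>p\<in>V. \<Sum>u\<in>nbrs V E p. x u - x p)" by (rule nbrs_sum_swap[OF assms])
  also have "\<dots> = - (\<Sum>p\<in>V. \<Sum>u\<in>nbrs V E p. x p - x u)"
    by (simp add: sum_negf[symmetric])
  finally show ?thesis by (simp add: lap_def)
qed

lemma lap_diff: "lap V E (\<lambda>t. x t - z t) v = lap V E x v - lap V E z v"
  unfolding lap_def by (simp add: sum_subtractf[symmetric] algebra_simps)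

lemma lap_sum: "lap V E (\<lambda>t. \<Sum>q\<in>Q. c q * h q t) v = (\<Sum>q\<in>Q. c q * lap V E (h q) v)"
  unfolding lap_def
  by (simp add: sum_subtractf[symmetric] right_diff_distrib sum_distrib_left sum.swap[of _ Q])

lemma lap_zero: "lap V E (\<lambda>t. 0) v = 0" by (simp add: lap_def)
lemma lap_neg: "lap V E (\<lambda>t. - x t) v = - lap V E x v"
  unfolding lap_def by (simp add: sum_negf[symmetric])

lemma harm_const:
  assumes sg: "simple_graph V E" and con: "graph_connected V E"
    and h: "\<forall>v\<in>V. lap V E x v = 0" and i: "i \<in> V" and j: "j \<in> V"
  shows "x i = x j"
proof -
  have fin: "finite V" using sg sg_finite by blast
  define M where "M = Max (x ` V)"
  have "M \<in> x ` V" unfolding M_def using fin i by (intro Max_in) auto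
  then obtain v0 where v0: "v0 \<in> V" "x v0 = M" by auto
  have le: "\<And>u. u \<in> V \<Longrightarrow> x u \<le> M" unfolding M_def using fin by auto
  have main: "(\<lambda>x y. {x, y} \<in> E)\<^sup>*\<^sup>* v0 u \<Longrightarrow> u \<in> V \<and> x u = M" for u
  proof (induction rule: rtranclp_induct)
    case base then show ?case using v0 by simp
  next
    case (step y z)
    have yz: "z \<in> V" "y \<noteq> z" using sg_pair[OF sg step(2)] by auto
    have zn: "z \<in> nbrs V E y" unfolding nbrs_def using yz step(2) by (simp add: insert_commute)
    have s0: "(\<Sum>u\<in>nbrs V E y. x y - x u) = 0" using h step(3) unfolding lap_def by blast
    have nn: "0 \<le> x y - x u" if "u \<in> nbrs V E y" for u
    proof -
      have "u \<in> V" using that by (simp add: nbrs_def)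
      then show ?thesis using le[of u] step(3) by simp
    qed
    have "\<forall>u\<in>nbrs V E y. x y - x u = 0"
      using iffD1[OF sum_nonneg_eq_0_iff[where f="\<lambda>u. x y - x u", OF nbrs_fin[OF sg] nn] s0] by simp
    then show ?case using zn step(3) yz by auto
  qed
  have "x i = M" using main con v0(1) i unfolding graph_connected_def by blast
  moreover have "x j = M" using main con v0(1) j unfolding graph_connected_def by blast
  ultimately show ?thesis by simp
qed

lemma exists_sol:
  assumes sg: "simple_graph V E" and con: "graph_connected V E"
    and b: "(\<Sum>v\<in>V. b v) = 0"
  shows "\<exists>x. \<forall>v\<in>V. lap V E x v = b v"
proof (cases "V = {}")
  case True then show ?thesis by simp
next
  case False
  then obtain r where r: "r \<in> V" by blast
  have fin: "finite V" using sg sg_finite by blast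
  define A where "A v u = (if v = r then (if u = r then 1 else 0)
     else (if u = v then real (card (nbrs V E v)) else 0) - (if u \<in> nbrs V E v then 1 else 0))"
    for v u
  have Alap: "(\<Sum>u\<in>V. A v u * x u) = lap V E x v" if "v \<in> V" "v \<noteq> r" for v x
  proof -
    have ns: "nbrs V E v \<subseteq> V" by (auto simp: nbrs_def)
    have setN: "{u\<in>V. u \<in> nbrs V E v} = nbrs V E v" using ns by blast
    have "(\<Sum>u\<in>V. A v u * x u) = (\<Sum>u\<in>V. (if u = v then real (card (nbrs V E v)) * x u else 0)
        - (if u \<in> nbrs V E v then x u else 0))"
      using that by (intro sum.cong) (auto simp: A_def algebra_simps)
    also have "\<dots> = (\<Sum>u\<in>V. (if u = v then real (card (nbrs V E v)) * x u else 0))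
        - (\<Sum>u\<in>V. (if u \<in> nbrs V E v then x u else 0))"
      by (simp add: sum_subtractf)
    also have "\<dots> = real (card (nbrs V E v)) * x v - (\<Sum>u\<in>nbrs V E v. x u)"
      using that fin ns setN by (simp add: sum.inter_filter[symmetric] Int_absorb1 sum.If_cases)
    also have "\<dots> = lap V E x v" by (simp add: lap_def sum_subtractf)
    finally show ?thesis .
  qed
  have Ar0: "A r u * x u = (if u = r then x u else 0)" for u x by (simp add: A_def)
  have Ar: "(\<Sum>u\<in>V. A r u * x u) = x r" for x using fin r by (simp add: Ar0)
  have lapr: "lap V E x r = - (\<Sum>v\<in>V-{r}. lap V E x v)" for x
    using lap_sum_zero[OF sg, of x] sum.remove[OF fin r, of "lap V E x"] by linarith
  have "\<exists>x. \<forall>v\<in>V. (\<Sum>u\<in>V. A v u * x u) = (if v = r then 0 else b v)"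
  proof (rule inj_imp_surj_fin[OF fin])
    fix x assume h0: "\<forall>v\<in>V. (\<Sum>u\<in>V. A v u * x u) = 0"
    have xr: "x r = 0" using h0 r Ar by metis
    have l0: "\<forall>v\<in>V-{r}. lap V E x v = 0"
    proof
      fix v assume v: "v \<in> V - {r}"
      then show "lap V E x v = 0" using h0 Alap[of v x] by auto
    qed
    have "\<forall>v\<in>V. lap V E x v = 0" using l0 lapr[of x] by auto
    then show "\<forall>u\<in>V. x u = 0" using harm_const[OF sg con] r xr by metis
  qed
  then obtain x where x: "\<forall>v\<in>V. (\<Sum>u\<in>V. A v u * x u) = (if v = r then 0 else b v)" by blast
  have o: "\<forall>v\<in>V-{r}. lap V E x v = b v"
  proof
    fix v assume v: "v \<in> V - {r}"
    then show "lap V E x v = b v" using x Alap[of v x] by auto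
  qed
  have "lap V E x r = b r"
  proof -
    have "lap V E x r = - (\<Sum>v\<in>V-{r}. b v)" using lapr[of x] o by simp
    also have "\<dots> = b r" using b sum.remove[OF fin r, of b] by linarith
    finally show ?thesis .
  qed
  then have "\<forall>v\<in>V. lap V E x v = b v"
  proof (intro ballI)
    fix v assume "lap V E x r = b r" "v \<in> V"
    then show "lap V E x v = b v" using o by (cases "v = r") auto
  qed
  then show ?thesis by blast
qed

lemma res_eq:
  assumes sg: "simple_graph V E" and con: "graph_connected V E" and i: "i \<in> V" and j: "j \<in> V"
    and x: "\<forall>v\<in>V. lap V E x v = (if v = i then 1 else 0) - (if v = j then 1 else 0)"
  shows "resistance V E i j = x i - x j"
  unfolding resistance_def
proof (rule the_equality)
  show "\<exists>x'. (\<forall>v\<in>V. (\<Sum>u\<in>{u \<in> V. {u, v} \<in> E}. x' v - x' u) =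
          (if v = i then 1 else 0) - (if v = j then 1 else 0)) \<and> x i - x j = x' i - x' j"
    by (rule exI[of _ x]) (use x in \<open>simp add: lap_def nbrs_def\<close>)
next
  fix r :: real assume "\<exists>x'. (\<forall>v\<in>V. (\<Sum>u\<in>{u \<in> V. {u, v} \<in> E}. x' v - x' u) =
          (if v = i then 1 else 0) - (if v = j then 1 else 0)) \<and> r = x' i - x' j"
  then obtain x' where x': "\<forall>v\<in>V. lap V E x' v = (if v = i then 1 else 0) - (if v = j then 1 else 0)"
    and r: "r = x' i - x' j" by (auto simp: lap_def nbrs_def)
  have "\<forall>v\<in>V. lap V E (\<lambda>t. x' t - x t) v = 0" using x x' by (simp add: lap_diff)
  from harm_const[OF sg con this i j] show "r = x i - x j" using r by simp
qed

lemma res_eq_sym: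
  assumes sg: "simple_graph V E" and con: "graph_connected V E" and i: "i \<in> V" and j: "j \<in> V"
    and x: "\<forall>v\<in>V. lap V E x v = (if v = i then 1 else 0) - (if v = j then 1 else 0)"
  shows "resistance V E j i = x i - x j"
proof -
  have "\<forall>v\<in>V. lap V E (\<lambda>t. - x t) v = (if v = j then 1 else 0) - (if v = i then 1 else 0)"
    using x by (simp add: lap_neg)
  from res_eq[OF sg con j i this] show ?thesis by simp
qed

lemma res_self:
  assumes sg: "simple_graph V E" and con: "graph_connected V E" and i: "i \<in> V"
  shows "resistance V E i i = 0"
  using res_eq[OF sg con i i, of "\<lambda>t. 0"] by (simp add: lap_zero)

lemma degree_nbrs:
  assumes sg: "simple_graph V E"
  shows "{e\<in>E. v \<in> e} = (\<lambda>u. {u, v}) ` nbrs V E v" "inj_on (\<lambda>u. {u, v}) (nbrs V E v)"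
    "Defs.degree E v = card (nbrs V E v)"
proof -
  have h1a: "{e\<in>E. v \<in> e} \<subseteq> (\<lambda>u. {u, v}) ` nbrs V E v"
  proof
    fix e assume "e \<in> {e\<in>E. v \<in> e}"
    then have e: "e \<in> E" "v \<in> e" by auto
    have "card e = 2" using sg_edge[OF sg e(1)] by simp
    then obtain a b where ab: "e = {a,b}" "a \<noteq> b" by (meson card_2_iff)
    define u where "u = (if v = a then b else a)"
    have eu: "e = {u, v}" using ab e(2) unfolding u_def by auto
    have "u \<in> V" using sg_pair[OF sg, of u v] e(1) eu by simp
    then have "u \<in> nbrs V E v" using e(1) eu by (simp add: nbrs_def)
    then show "e \<in> (\<lambda>u. {u, v}) ` nbrs V E v" using eu by blast
  qed
  have h1b: "(\<lambda>u. {u, v}) ` nbrs V E v \<subseteq> {e\<in>E. v \<in> e}" by (auto simp: nbrs_def)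
  show 1: "{e\<in>E. v \<in> e} = (\<lambda>u. {u, v}) ` nbrs V E v" using h1a h1b by (rule subset_antisym)
  show 2: "inj_on (\<lambda>u. {u, v}) (nbrs V E v)"
    by (auto simp: inj_on_def doubleton_eq_iff)
  show "Defs.degree E v = card (nbrs V E v)"
    unfolding Defs.degree_def 1 using card_image[OF 2] by simp
qed

lemma NB:
  assumes sg: "simple_graph V E"
  shows "(\<Sum>e\<in>{e\<in>E. v \<in> e}. \<Sum>p\<in>e. f p) = real (Defs.degree E v) * f v + (\<Sum>u\<in>nbrs V E v. f u)"
proof -
  have "(\<Sum>e\<in>{e\<in>E. v \<in> e}. \<Sum>p\<in>e. f p) = (\<Sum>u\<in>nbrs V E v. \<Sum>p\<in>{u,v}. f p)"
    unfolding degree_nbrs(1)[OF sg] by (simp add: sum.reindex[OF degree_nbrs(2)[OF sg]])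
  also have "\<dots> = (\<Sum>u\<in>nbrs V E v. f u + f v)"
    by (rule sum.cong) (auto simp: nbrs_def dest: sg_pair[OF sg])
  also have "\<dots> = real (Defs.degree E v) * f v + (\<Sum>u\<in>nbrs V E v. f u)"
    by (simp add: sum.distrib degree_nbrs(3)[OF sg])
  finally show ?thesis .
qed

lemma DC1:
  assumes sg: "simple_graph V E"
  shows "(\<Sum>e\<in>E. \<Sum>p\<in>e. H e p) = (\<Sum>p\<in>V. \<Sum>e\<in>{e\<in>E. p \<in> e}. H e p)"
proof -
  have fin: "finite V" "finite E" using sg sg_finite sg_finE by blast+
  have "(\<Sum>e\<in>E. \<Sum>p\<in>e. H e p) = (\<Sum>e\<in>E. \<Sum>p\<in>V. if p \<in> e then H e p else 0)"
  proof (rule sum.cong[OF refl])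
    fix e assume "e \<in> E"
    then have "e \<subseteq> V" using sg_edge[OF sg] by blast
    then show "(\<Sum>p\<in>e. H e p) = (\<Sum>p\<in>V. if p \<in> e then H e p else 0)"
      using fin by (simp add: sum.inter_filter Int_absorb1 sum.If_cases)
  qed
  also have "\<dots> = (\<Sum>p\<in>V. \<Sum>e\<in>E. if p \<in> e then H e p else 0)" by (rule sum.swap)
  also have "\<dots> = (\<Sum>p\<in>V. \<Sum>e\<in>{e\<in>E. p \<in> e}. H e p)"
    using fin by (simp add: sum.inter_filter)
  finally show ?thesis .
qed




lemma Inl_img_eq: "(Inl ` e = {Inl u, Inl v}) \<longleftrightarrow> e = {u, v}"
proof -
  have "{Inl u, Inl v} = Inl ` {u, v}" by simp
  then show ?thesis by (metis inj_Inl inj_image_eq_iff)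
qed

lemma tri_mem:
  "{Inl u, Inl v} \<in> tri_E V E \<longleftrightarrow> {u, v} \<in> E"
  "{Inl u, Inr e} \<in> tri_E V E \<longleftrightarrow> e \<in> E \<and> u \<in> e"
  "{Inr e, Inl u} \<in> tri_E V E \<longleftrightarrow> e \<in> E \<and> u \<in> e"
  "{Inr e, Inr f} \<notin> tri_E V E"
proof -
  show "{Inl u, Inl v} \<in> tri_E V E \<longleftrightarrow> {u, v} \<in> E"
  proof -
    have 1: "{Inl u, Inl v} = Inl ` {u,v}" by simp
    have 2: "{Inl u, Inl v} \<in> (\<lambda>e. Inl ` e) ` E \<longleftrightarrow> {u,v} \<in> E"
      unfolding 1 by (metis (no_types) image_iff inj_Inl inj_image_eq_iff)
    have 3: "{Inl u, Inl v} \<notin> {{Inl u', Inr e'} | u' e'. e' \<in> E \<and> u' \<in> e'}"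
      by (auto simp: doubleton_eq_iff)
    show ?thesis unfolding tri_E_def using 2 3 by blast
  qed
  show "{Inl u, Inr e} \<in> tri_E V E \<longleftrightarrow> e \<in> E \<and> u \<in> e"
    unfolding tri_E_def by (auto simp: doubleton_eq_iff)
  then show "{Inr e, Inl u} \<in> tri_E V E \<longleftrightarrow> e \<in> E \<and> u \<in> e"
    by (simp add: insert_commute)
  show "{Inr e, Inr f} \<notin> tri_E V E"
    unfolding tri_E_def by (auto simp: doubleton_eq_iff)
qed

lemma tri_simple:
  assumes sg: "simple_graph V E"
  shows "simple_graph (tri_V V E) (tri_E V E)"
  unfolding simple_graph_def
proof (rule conjI)
  show "finite (tri_V V E)" using sg_finite[OF sg] sg_finE[OF sg] by (simp add: tri_V_def)
next
  show "\<forall>x\<in>tri_E V E. card x = 2 \<and> x \<subseteq> tri_V V E"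
  proof
  fix x assume "x \<in> tri_E V E"
  then consider (a) e where "e \<in> E" "x = Inl ` e" | (b) u e where "e \<in> E" "u \<in> e" "x = {Inl u, Inr e}"
    unfolding tri_E_def by blast
  then show "card x = 2 \<and> x \<subseteq> tri_V V E"
  proof cases
    case (a e)
    then show ?thesis using sg_edge[OF sg a(1)]
      by (auto simp: card_image tri_V_def)
  next
    case (b u e)
    then show ?thesis using sg_edge[OF sg b(1)] by (auto simp: tri_V_def)
  qed
  qed
qed

lemma nbrs_T_Inl:
  assumes sg: "simple_graph V E"
  shows "nbrs (tri_V V E) (tri_E V E) (Inl v) = Inl ` nbrs V E v \<union> Inr ` {e\<in>E. v \<in> e}"
proof (rule Set.set_eqI)
  fix t show "t \<in> nbrs (tri_V V E) (tri_E V E) (Inl v) \<longleftrightarrow> t \<in> Inl ` nbrs V E v \<union> Inr ` {e\<in>E. v \<in> e}"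
    by (cases t) (auto simp: nbrs_def tri_V_def tri_mem)
qed

lemma nbrs_T_Inr:
  assumes sg: "simple_graph V E" and e: "e \<in> E"
  shows "nbrs (tri_V V E) (tri_E V E) (Inr e) = Inl ` e"
proof (rule Set.set_eqI)
  have eV: "e \<subseteq> V" using sg_edge[OF sg e] by simp
  fix t show "t \<in> nbrs (tri_V V E) (tri_E V E) (Inr e) \<longleftrightarrow> t \<in> Inl ` e"
    using eV e by (cases t) (auto simp: nbrs_def tri_V_def tri_mem)
qed

lemma tri_conn:
  assumes sg: "simple_graph V E" and con: "graph_connected V E"
  shows "graph_connected (tri_V V E) (tri_E V E)"
proof -
  let ?R = "(\<lambda>x y. {x, y} \<in> tri_E V E)\<^sup>*\<^sup>*"
  have oo: "?R (Inl u) (Inl v)" if "(\<lambda>x y. {x, y} \<in> E)\<^sup>*\<^sup>* u v" for u v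
    using that
  proof (induction rule: rtranclp_induct)
    case base then show ?case by simp
  next
    case (step y z)
    then have "{Inl y, Inl z} \<in> tri_E V E" by (simp add: tri_mem)
    with step(3) show ?case by (simp add: rtranclp.rtrancl_into_rtrancl)
  qed
  have toV: "\<exists>a\<in>V. ?R t (Inl a) \<and> ?R (Inl a) t" if "t \<in> tri_V V E" for t
  proof (cases t)
    case (Inl a) then show ?thesis using that by (auto simp: tri_V_def)
  next
    case (Inr e)
    then have e: "e \<in> E" using that by (auto simp: tri_V_def)
    then have "card e = 2" "e \<subseteq> V" using sg_edge[OF sg] by auto
    then obtain a where a: "a \<in> e" "a \<in> V" by (metis card_2_iff insertI1 subsetD)
    have "{Inr e, Inl a} \<in> tri_E V E" "{Inl a, Inr e} \<in> tri_E V E" using e a by (simp_all add: tri_mem)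
    then show ?thesis using a Inr by (metis r_into_rtranclp)
  qed
  show ?thesis unfolding graph_connected_def
  proof (intro ballI)
    fix s t assume s: "s \<in> tri_V V E" and t: "t \<in> tri_V V E"
    obtain a where a: "a \<in> V" "?R s (Inl a)" using toV[OF s] by blast
    obtain b where b: "b \<in> V" "?R (Inl b) t" using toV[OF t] by blast
    have "?R (Inl a) (Inl b)" using oo con a(1) b(1) unfolding graph_connected_def by blast
    then show "?R s t" using a(2) b(2) by (meson rtranclp_trans)
  qed
qed

lemma deg_T:
  assumes sg: "simple_graph V E"
  shows "v \<in> V \<Longrightarrow> Defs.degree (tri_E V E) (Inl v) = 2 * Defs.degree E v"
    "e \<in> E \<Longrightarrow> Defs.degree (tri_E V E) (Inr e) = 2"
proof -
  have sT: "simple_graph (tri_V V E) (tri_E V E)" by (rule tri_simple[OF sg])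
  have fin: "finite (nbrs V E v)" "finite {e\<in>E. v \<in> e}" for v
    using nbrs_fin[OF sg] sg_finE[OF sg] by auto
  show "Defs.degree (tri_E V E) (Inl v) = 2 * Defs.degree E v" if "v \<in> V"
  proof -
    have "Defs.degree (tri_E V E) (Inl v) = card (Inl ` nbrs V E v \<union> Inr ` {e\<in>E. v \<in> e})"
      by (simp add: degree_nbrs(3)[OF sT] nbrs_T_Inl[OF sg])
    also have "\<dots> = card (nbrs V E v) + card {e\<in>E. v \<in> e}"
      by (subst card_Un_disjoint) (auto simp: fin card_image)
    also have "\<dots> = 2 * Defs.degree E v"
      by (simp add: degree_nbrs(3)[OF sg, symmetric] Defs.degree_def)
    finally show ?thesis .
  qed
  show "Defs.degree (tri_E V E) (Inr e) = 2" if "e \<in> E"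
    using that sg_edge[OF sg that]
    by (simp add: degree_nbrs(3)[OF sT] nbrs_T_Inr[OF sg] card_image)
qed

lemma lap_T_Inl:
  assumes sg: "simple_graph V E"
  shows "lap (tri_V V E) (tri_E V E) y (Inl v) =
     (\<Sum>u\<in>nbrs V E v. y (Inl v) - y (Inl u)) + (\<Sum>e\<in>{e\<in>E. v \<in> e}. y (Inl v) - y (Inr e))"
proof -
  have fin: "finite (nbrs V E v)" "finite {e\<in>E. v \<in> e}"
    using nbrs_fin[OF sg] sg_finE[OF sg] by auto
  show ?thesis unfolding lap_def nbrs_T_Inl[OF sg]
    by (subst sum.union_disjoint) (auto simp: fin sum.reindex)
qed

lemma lap_T_Inr:
  assumes sg: "simple_graph V E" and e: "e \<in> E"
  shows "lap (tri_V V E) (tri_E V E) y (Inr e) = (\<Sum>p\<in>e. y (Inr e) - y (Inl p))"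
  unfolding lap_def nbrs_T_Inr[OF sg e] by (simp add: sum.reindex)

lemma T_pot:
  assumes sg: "simple_graph V E"
    and lapx: "\<forall>v\<in>V. lap V E x v = \<alpha> v + (\<Sum>e\<in>{e\<in>E. v \<in> e}. \<sigma> e) / 2"
  shows "\<forall>t\<in>tri_V V E. lap (tri_V V E) (tri_E V E)
      (\<lambda>t. case t of Inl v \<Rightarrow> 2/3 * x v | Inr e \<Rightarrow> (\<Sum>p\<in>e. x p) / 3 + \<sigma> e / 2) t
     = (case t of Inl v \<Rightarrow> \<alpha> v | Inr e \<Rightarrow> \<sigma> e)"
proof
  let ?y = "\<lambda>t. case t of Inl v \<Rightarrow> 2/3 * x v | Inr e \<Rightarrow> (\<Sum>p\<in>e. x p) / 3 + \<sigma> e / 2"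
  fix t assume t: "t \<in> tri_V V E"
  show "lap (tri_V V E) (tri_E V E) ?y t = (case t of Inl v \<Rightarrow> \<alpha> v | Inr e \<Rightarrow> \<sigma> e)"
  proof (cases t)
    case (Inl v)
    then have v: "v \<in> V" using t by (auto simp: tri_V_def)
    have c2: "\<And>e. e \<in> {e\<in>E. v \<in> e} \<Longrightarrow> card e = 2" using sg_edge[OF sg] by auto
    have "(\<Sum>e\<in>{e\<in>E. v \<in> e}. ?y (Inl v) - ?y (Inr e))
       = (\<Sum>e\<in>{e\<in>E. v \<in> e}. (\<Sum>p\<in>e. x v - x p) / 3 - \<sigma> e / 2)"
    proof (rule sum.cong[OF refl])
      fix e assume "e \<in> {e\<in>E. v \<in> e}"
      then have "card e = 2" by (rule c2)
      then show "?y (Inl v) - ?y (Inr e) = (\<Sum>p\<in>e. x v - x p) / 3 - \<sigma> e / 2"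
        by (simp add: sum_subtractf)
    qed
    also have "\<dots> = (\<Sum>e\<in>{e\<in>E. v \<in> e}. \<Sum>p\<in>e. x v - x p) / 3 - (\<Sum>e\<in>{e\<in>E. v \<in> e}. \<sigma> e) / 2"
      unfolding sum_divide_distrib by (rule sum_subtractf)
    also have "(\<Sum>e\<in>{e\<in>E. v \<in> e}. \<Sum>p\<in>e. x v - x p) = lap V E x v"
      using NB[OF sg, where v=v and f="\<lambda>p. x v - x p"] by (simp add: lap_def)
    finally have h2: "(\<Sum>e\<in>{e\<in>E. v \<in> e}. ?y (Inl v) - ?y (Inr e)) =
        lap V E x v / 3 - (\<Sum>e\<in>{e\<in>E. v \<in> e}. \<sigma> e) / 2" .
    have h1: "(\<Sum>u\<in>nbrs V E v. ?y (Inl v) - ?y (Inl u)) = 2/3 * lap V E x v"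
      by (simp add: lap_def sum_distrib_left right_diff_distrib)
    have "lap (tri_V V E) (tri_E V E) ?y (Inl v) = (\<Sum>u\<in>nbrs V E v. ?y (Inl v) - ?y (Inl u))
       + (\<Sum>e\<in>{e\<in>E. v \<in> e}. ?y (Inl v) - ?y (Inr e))" by (rule lap_T_Inl[OF sg])
    also have "\<dots> = 2/3 * lap V E x v + (lap V E x v / 3 - (\<Sum>e\<in>{e\<in>E. v \<in> e}. \<sigma> e) / 2)"
      by (simp only: h1 h2)
    also have "\<dots> = \<alpha> v"
    proof -
      have l: "lap V E x v = \<alpha> v + (\<Sum>e\<in>{e\<in>E. v \<in> e}. \<sigma> e) / 2" using lapx v by blast
      show ?thesis unfolding l by (simp add: field_simps)
    qed
    finally show ?thesis using Inl by simp
  next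
    case (Inr e)
    then have e: "e \<in> E" using t by (auto simp: tri_V_def)
    have "card e = 2" using sg_edge[OF sg e] by simp
    then show ?thesis using Inr
      by (simp add: lap_T_Inr[OF sg e] sum_subtractf sum_divide_distrib[symmetric] sum_distrib_left)
  qed
qed




lemma lap_add: "lap V E (\<lambda>t. x t + z t) v = lap V E x v + lap V E z v"
  unfolding lap_def by (simp add: sum.distrib[symmetric] algebra_simps)
lemma lap_scale: "lap V E (\<lambda>t. c * x t) v = c * lap V E x v"
  unfolding lap_def by (simp add: sum_distrib_left algebra_simps)
lemma lap_div: "lap V E (\<lambda>t. x t / c) v = lap V E x v / c"
  unfolding lap_def by (simp add: sum_divide_distrib diff_divide_distrib)

lemma resT_from:
  assumes sg: "simple_graph V E" and con: "graph_connected V E"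
    and lapx: "\<forall>v\<in>V. lap V E x v = \<alpha> v + (\<Sum>e\<in>{e\<in>E. v \<in> e}. \<sigma> e) / 2"
    and i: "i \<in> tri_V V E" and j: "j \<in> tri_V V E"
    and d: "\<forall>t\<in>tri_V V E. (case t of Inl v \<Rightarrow> \<alpha> v | Inr e \<Rightarrow> \<sigma> e)
             = (if t = i then 1 else 0) - (if t = j then 1 else 0)"
  defines "y \<equiv> (\<lambda>t. case t of Inl v \<Rightarrow> 2/3 * x v | Inr e \<Rightarrow> (\<Sum>p\<in>e. x p) / 3 + \<sigma> e / 2)"
  shows "resistance (tri_V V E) (tri_E V E) i j = y i - y j"
    "resistance (tri_V V E) (tri_E V E) j i = y i - y j"
proof -
  have L: "\<forall>t\<in>tri_V V E. lap (tri_V V E) (tri_E V E) y t = (if t = i then 1 else 0) - (if t = j then 1 else 0)"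
    using T_pot[OF sg lapx] d unfolding y_def by simp
  show "resistance (tri_V V E) (tri_E V E) i j = y i - y j"
    by (rule res_eq[OF tri_simple[OF sg] tri_conn[OF sg con] i j L])
  show "resistance (tri_V V E) (tri_E V E) j i = y i - y j"
    by (rule res_eq_sym[OF tri_simple[OF sg] tri_conn[OF sg con] i j L])
qed

lemma edge_ab:
  assumes sg: "simple_graph V E" and e: "e \<in> E"
  obtains a b where "e = {a, b}" "a \<noteq> b" "a \<in> V" "b \<in> V"
proof -
  have "card e = 2" "e \<subseteq> V" using sg_edge[OF sg e] by auto
  then obtain a b where "e = {a,b}" "a \<noteq> b" by (meson card_2_iff)
  then show ?thesis using that \<open>e \<subseteq> V\<close> by auto
qed

lemma sum_neg_delta:
  assumes "finite S"
  shows "(\<Sum>f\<in>S. - (if f = e then (1::real) else 0)) = - (if e \<in> S then 1 else 0)"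
  using assms by (simp add: sum_negf)

locale rsetup =
  fixes V :: "'a set" and E :: "'a set set" and r :: 'a and g :: "'a \<Rightarrow> 'a \<Rightarrow> real"
  assumes sg: "simple_graph V E" and con: "graph_connected V E" and r: "r \<in> V"
    and gp: "\<And>p v. p \<in> V \<Longrightarrow> v \<in> V \<Longrightarrow>
       lap V E (g p) v = (if v = p then 1 else 0) - (if v = r then 1 else 0)"
begin

definition Om :: "'a \<Rightarrow> 'a \<Rightarrow> real" where "Om p q = g p p - g q p - g p q + g q q"

lemma Om_sym: "Om p q = Om q p" by (simp add: Om_def)
lemma Om_self: "Om p p = 0" by (simp add: Om_def)

lemma resG: "i \<in> V \<Longrightarrow> j \<in> V \<Longrightarrow> resistance V E i j = Om i j"
  using res_eq[OF sg con, of i j "\<lambda>t. g i t - g j t"]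
  by (simp add: lap_diff gp Om_def)

lemma finE: "finite E" using sg_finE[OF sg] .
lemma finV: "finite V" using sg_finite[OF sg] .

lemma Foster: "(\<Sum>e\<in>E. \<Sum>p\<in>e. \<Sum>q\<in>e. Om p q) = 2 * (real (card V) - 1)"
proof -
  have "(\<Sum>e\<in>E. \<Sum>p\<in>e. \<Sum>q\<in>e. Om p q) = (\<Sum>p\<in>V. \<Sum>e\<in>{e\<in>E. p \<in> e}. \<Sum>q\<in>e. Om p q)"
    by (rule DC1[OF sg])
  also have "\<dots> = (\<Sum>p\<in>V. \<Sum>u\<in>nbrs V E p. Om p u)"
    by (simp add: NB[OF sg] Om_self)
  also have "\<dots> = (\<Sum>p\<in>V. \<Sum>u\<in>nbrs V E p. g p p - g p u) + (\<Sum>p\<in>V. \<Sum>u\<in>nbrs V E p. g u u - g u p)"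
    by (simp add: Om_def sum.distrib[symmetric] algebra_simps)
  also have "(\<Sum>p\<in>V. \<Sum>u\<in>nbrs V E p. g u u - g u p) = (\<Sum>p\<in>V. \<Sum>u\<in>nbrs V E p. g p p - g p u)"
    using nbrs_sum_swap[OF sg, of "\<lambda>p u. g p p - g p u"] by simp
  also have "(\<Sum>p\<in>V. \<Sum>u\<in>nbrs V E p. g p p - g p u) = (\<Sum>p\<in>V. lap V E (g p) p)"
    by (simp add: lap_def)
  also have "\<dots> = (\<Sum>p\<in>V. 1 - (if p = r then 1 else 0))"
    by (rule sum.cong) (simp_all add: gp)
  also have "\<dots> = real (card V) - 1"
    using r finV by (simp add: sum_subtractf)
  finally show ?thesis by simp
qed

abbreviation "VT \<equiv> tri_V V E"
abbreviation "ET \<equiv> tri_E V E"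

lemma resT_oo:
  assumes u: "u \<in> V" and v: "v \<in> V"
  shows "resistance VT ET (Inl u) (Inl v) = 2/3 * Om u v"
proof -
  let ?x = "\<lambda>t. g u t - g v t"
  let ?\<alpha> = "\<lambda>w. (if w = u then 1 else 0) - (if w = v then (1::real) else 0)"
  have lapx: "\<forall>w\<in>V. lap V E ?x w = ?\<alpha> w + (\<Sum>e\<in>{e\<in>E. w \<in> e}. (\<lambda>e. 0) e) / 2"
    using u v by (simp add: lap_diff gp)
  have d: "\<forall>t\<in>VT. (case t of Inl w \<Rightarrow> ?\<alpha> w | Inr e \<Rightarrow> (\<lambda>e. 0) e)
             = (if t = Inl u then 1 else 0) - (if t = Inl v then 1 else 0)"
    by (auto split: sum.split)
  have uv: "Inl u \<in> VT" "Inl v \<in> VT" using u v by (auto simp: tri_V_def)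
  show ?thesis using resT_from(1)[OF sg con lapx uv d] by (simp add: Om_def field_simps)
qed

lemma resT_on:
  assumes u: "u \<in> V" and e: "e \<in> E"
  shows "resistance VT ET (Inl u) (Inr e) = (\<Sum>p\<in>e. Om p u) / 3 - (\<Sum>p\<in>e. \<Sum>q\<in>e. Om p q) / 12 + 1/2"
    "resistance VT ET (Inr e) (Inl u) = (\<Sum>p\<in>e. Om p u) / 3 - (\<Sum>p\<in>e. \<Sum>q\<in>e. Om p q) / 12 + 1/2"
proof -
  obtain a b where ab: "e = {a, b}" "a \<noteq> b" "a \<in> V" "b \<in> V" using edge_ab[OF sg e] .
  let ?x = "\<lambda>t. g u t - (g a t + g b t) / 2"
  let ?\<alpha> = "\<lambda>w. if w = u then (1::real) else 0"
  let ?\<sigma> = "\<lambda>f. - (if f = e then (1::real) else 0)"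
  have lapx: "\<forall>w\<in>V. lap V E ?x w = ?\<alpha> w + (\<Sum>f\<in>{f\<in>E. w \<in> f}. ?\<sigma> f) / 2"
  proof
    fix w assume w: "w \<in> V"
    have s: "(\<Sum>f\<in>{f\<in>E. w \<in> f}. ?\<sigma> f) = - (if w = a \<or> w = b then 1 else 0)"
      using sum_neg_delta[of "{f\<in>E. w \<in> f}" e] finE e ab(1) by simp
    show "lap V E ?x w = ?\<alpha> w + (\<Sum>f\<in>{f\<in>E. w \<in> f}. ?\<sigma> f) / 2"
      unfolding s using w u ab by (simp add: lap_diff lap_add lap_div gp)
  qed
  have d: "\<forall>t\<in>VT. (case t of Inl w \<Rightarrow> ?\<alpha> w | Inr f \<Rightarrow> ?\<sigma> f)
             = (if t = Inl u then 1 else 0) - (if t = Inr e then 1 else 0)"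
    by (auto split: sum.split)
  have uv: "Inl u \<in> VT" "Inr e \<in> VT" using u e by (auto simp: tri_V_def)
  have val: "(2/3 * ?x u) - ((\<Sum>p\<in>e. ?x p) / 3 + ?\<sigma> e / 2)
     = (\<Sum>p\<in>e. Om p u) / 3 - (\<Sum>p\<in>e. \<Sum>q\<in>e. Om p q) / 12 + 1/2"
    using ab by (simp add: Om_def field_simps)
  show "resistance VT ET (Inl u) (Inr e) = (\<Sum>p\<in>e. Om p u) / 3 - (\<Sum>p\<in>e. \<Sum>q\<in>e. Om p q) / 12 + 1/2"
    using resT_from(1)[OF sg con lapx uv d] val by simp
  show "resistance VT ET (Inr e) (Inl u) = (\<Sum>p\<in>e. Om p u) / 3 - (\<Sum>p\<in>e. \<Sum>q\<in>e. Om p q) / 12 + 1/2"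
    using resT_from(2)[OF sg con lapx uv d] val by simp
qed

lemma resT_nn:
  assumes e: "e \<in> E" and f: "f \<in> E"
  shows "resistance VT ET (Inr e) (Inr f) = (\<Sum>p\<in>e. \<Sum>q\<in>f. Om p q) / 6
      - ((\<Sum>p\<in>e. \<Sum>q\<in>e. Om p q) + (\<Sum>p\<in>f. \<Sum>q\<in>f. Om p q)) / 12 + (if e = f then 0 else 1)"
proof (cases "e = f")
  case True
  have "Inr e \<in> VT" using e by (auto simp: tri_V_def)
  then show ?thesis using True res_self[OF tri_simple[OF sg] tri_conn[OF sg con]] by simp
next
  case False
  obtain a b where ab: "e = {a, b}" "a \<noteq> b" "a \<in> V" "b \<in> V" using edge_ab[OF sg e] .
  obtain c d where cd: "f = {c, d}" "c \<noteq> d" "c \<in> V" "d \<in> V" using edge_ab[OF sg f] .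
  let ?x = "\<lambda>t. ((g a t + g b t) - (g c t + g d t)) / 2"
  let ?\<alpha> = "\<lambda>w. (0::real)"
  let ?\<sigma> = "\<lambda>h. (if h = e then (1::real) else 0) - (if h = f then 1 else 0)"
  have lapx: "\<forall>w\<in>V. lap V E ?x w = ?\<alpha> w + (\<Sum>h\<in>{h\<in>E. w \<in> h}. ?\<sigma> h) / 2"
  proof
    fix w assume w: "w \<in> V"
    have s: "(\<Sum>h\<in>{h\<in>E. w \<in> h}. ?\<sigma> h) = (if w = a \<or> w = b then 1 else 0) - (if w = c \<or> w = d then 1 else 0)"
      using finE e f ab(1) cd(1) by (simp add: sum_subtractf)
    show "lap V E ?x w = ?\<alpha> w + (\<Sum>h\<in>{h\<in>E. w \<in> h}. ?\<sigma> h) / 2"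
      unfolding s using w ab cd by (simp add: lap_diff lap_add lap_div gp)
  qed
  have dd: "\<forall>t\<in>VT. (case t of Inl w \<Rightarrow> ?\<alpha> w | Inr h \<Rightarrow> ?\<sigma> h)
             = (if t = Inr e then 1 else 0) - (if t = Inr f then 1 else 0)"
    by (auto split: sum.split)
  have uv: "Inr e \<in> VT" "Inr f \<in> VT" using e f by (auto simp: tri_V_def)
  have val: "((\<Sum>p\<in>e. ?x p) / 3 + ?\<sigma> e / 2) - ((\<Sum>p\<in>f. ?x p) / 3 + ?\<sigma> f / 2)
     = (\<Sum>p\<in>e. \<Sum>q\<in>f. Om p q) / 6
      - ((\<Sum>p\<in>e. \<Sum>q\<in>e. Om p q) + (\<Sum>p\<in>f. \<Sum>q\<in>f. Om p q)) / 12 + 1"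
    using ab cd False by (simp add: Om_def field_simps)
  show ?thesis using resT_from(1)[OF sg con lapx uv dd] val False by simp
qed

end



lemma sum_rm: "finite A \<Longrightarrow> i \<in> A \<Longrightarrow> F i = 0 \<Longrightarrow> (\<Sum>j\<in>A-{i}. F j) = (\<Sum>j\<in>A. F j)"
  by (simp add: sum.remove)

lemma split_T:
  assumes sg: "simple_graph V E"
  shows "(\<Sum>t\<in>tri_V V E. h t) = (\<Sum>v\<in>V. h (Inl v)) + (\<Sum>e\<in>E. h (Inr e))"
  unfolding tri_V_def using sg_finite[OF sg] sg_finE[OF sg]
  by (subst sum.union_disjoint) (auto simp: sum.reindex)

context rsetup begin

abbreviation "D u \<equiv> real (Defs.degree E u)"

lemma DCD: "(\<Sum>e\<in>E. \<Sum>p\<in>e. G p) = (\<Sum>p\<in>V. D p * G p)"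
proof -
  have "(\<Sum>e\<in>E. \<Sum>p\<in>e. G p) = (\<Sum>p\<in>V. \<Sum>e\<in>{e\<in>E. p \<in> e}. G p)" by (rule DC1[OF sg])
  also have "\<dots> = (\<Sum>p\<in>V. D p * G p)" by (simp add: Defs.degree_def)
  finally show ?thesis .
qed

lemma sumD: "(\<Sum>v\<in>V. D v) = 2 * real (card E)"
proof -
  have "(\<Sum>v\<in>V. D v) = (\<Sum>e\<in>E. \<Sum>p\<in>e. (1::real))" using DCD[of "\<lambda>p. 1"] by simp
  also have "\<dots> = (\<Sum>e\<in>E. 2)" by (rule sum.cong) (simp_all add: sg_edge[OF sg])
  finally show ?thesis by simp
qed

lemma RG: "Rplus V E = (\<Sum>u\<in>V. \<Sum>v\<in>V. (D u + D v) * Om u v) / 2"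
proof -
  have "(\<Sum>j\<in>V-{i}. (D i + D j) * resistance V E i j) = (\<Sum>j\<in>V. (D i + D j) * Om i j)" if i: "i \<in> V" for i
  proof -
    have "(\<Sum>j\<in>V-{i}. (D i + D j) * resistance V E i j) = (\<Sum>j\<in>V-{i}. (D i + D j) * Om i j)"
      by (rule sum.cong) (use i resG in auto)
    also have "\<dots> = (\<Sum>j\<in>V. (D i + D j) * Om i j)" by (rule sum_rm[OF finV i]) (simp add: Om_self)
    finally show ?thesis .
  qed
  then show ?thesis unfolding Rplus_def by (simp cong: sum.cong)
qed

lemma RS: "Rstar V E = (\<Sum>u\<in>V. \<Sum>v\<in>V. (D u * D v) * Om u v) / 2"
proof -
  have "(\<Sum>j\<in>V-{i}. (D i * D j) * resistance V E i j) = (\<Sum>j\<in>V. (D i * D j) * Om i j)" if i: "i \<in> V" for i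
  proof -
    have "(\<Sum>j\<in>V-{i}. (D i * D j) * resistance V E i j) = (\<Sum>j\<in>V-{i}. (D i * D j) * Om i j)"
      by (rule sum.cong) (use i resG in auto)
    also have "\<dots> = (\<Sum>j\<in>V. (D i * D j) * Om i j)" by (rule sum_rm[OF finV i]) (simp add: Om_self)
    finally show ?thesis .
  qed
  then show ?thesis unfolding Rstar_def by (simp cong: sum.cong)
qed

abbreviation "DT t \<equiv> real (Defs.degree ET t)"
abbreviation "RT i j \<equiv> resistance VT ET i j"

lemma finVT: "finite VT" using sg_finite[OF tri_simple[OF sg]] .

lemma RT: "Rplus VT ET = (\<Sum>i\<in>VT. \<Sum>j\<in>VT. (DT i + DT j) * RT i j) / 2"
proof -
  have "(\<Sum>j\<in>VT-{i}. (DT i + DT j) * RT i j) = (\<Sum>j\<in>VT. (DT i + DT j) * RT i j)" if i: "i \<in> VT" for i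
    by (rule sum_rm[OF finVT i]) (simp add: res_self[OF tri_simple[OF sg] tri_conn[OF sg con] i])
  then show ?thesis unfolding Rplus_def by (simp cong: sum.cong)
qed

definition "Pe e = (\<Sum>p\<in>e. \<Sum>q\<in>e. Om p q)"
definition "Ce u e = (\<Sum>p\<in>e. Om p u) / 3 - Pe e / 12 + 1/2"
definition "Ne e f = (\<Sum>p\<in>e. \<Sum>q\<in>f. Om p q) / 6 - (Pe e + Pe f) / 12 + (if e = f then 0 else (1::real))"

lemma DTl: "v \<in> V \<Longrightarrow> DT (Inl v) = 2 * D v" using deg_T(1)[OF sg] by simp
lemma DTr: "e \<in> E \<Longrightarrow> DT (Inr e) = 2" using deg_T(2)[OF sg] by simp

lemma total: "2 * Rplus VT ET =
    (\<Sum>u\<in>V. \<Sum>v\<in>V. (2 * D u + 2 * D v) * (2/3 * Om u v))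
  + (\<Sum>u\<in>V. \<Sum>e\<in>E. (2 * D u + 2) * Ce u e)
  + (\<Sum>e\<in>E. \<Sum>v\<in>V. (2 + 2 * D v) * Ce v e)
  + (\<Sum>e\<in>E. \<Sum>f\<in>E. 4 * Ne e f)"
proof -
  have "2 * Rplus VT ET = (\<Sum>i\<in>VT. \<Sum>j\<in>VT. (DT i + DT j) * RT i j)" by (simp add: RT)
  also have "\<dots> = (\<Sum>u\<in>V. (\<Sum>v\<in>V. (DT (Inl u) + DT (Inl v)) * RT (Inl u) (Inl v))
          + (\<Sum>e\<in>E. (DT (Inl u) + DT (Inr e)) * RT (Inl u) (Inr e)))
      + (\<Sum>e\<in>E. (\<Sum>v\<in>V. (DT (Inr e) + DT (Inl v)) * RT (Inr e) (Inl v))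
          + (\<Sum>f\<in>E. (DT (Inr e) + DT (Inr f)) * RT (Inr e) (Inr f)))"
    by (simp add: split_T[OF sg])
  also have "\<dots> = (\<Sum>u\<in>V. (\<Sum>v\<in>V. (2 * D u + 2 * D v) * (2/3 * Om u v))
          + (\<Sum>e\<in>E. (2 * D u + 2) * Ce u e))
      + (\<Sum>e\<in>E. (\<Sum>v\<in>V. (2 + 2 * D v) * Ce v e)
          + (\<Sum>f\<in>E. 4 * Ne e f))"
    by (intro arg_cong2[where f="(+)"] sum.cong refl)
       (simp_all add: DTl DTr resT_oo resT_on resT_nn Ce_def Ne_def Pe_def)
  finally show ?thesis by (simp add: sum.distrib)
qed


definition "XX = (\<Sum>u\<in>V. \<Sum>v\<in>V. (D u + D v) * Om u v)"
definition "YY = (\<Sum>u\<in>V. \<Sum>v\<in>V. (D u * D v) * Om u v)"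
definition "ZZ = (\<Sum>u\<in>V. \<Sum>p\<in>V. D p * Om p u)"
definition "SP = (\<Sum>e\<in>E. Pe e)"

lemma XZ: "XX = 2 * ZZ"
proof -
  have "XX = (\<Sum>u\<in>V. \<Sum>v\<in>V. D u * Om u v) + (\<Sum>u\<in>V. \<Sum>v\<in>V. D v * Om u v)"
    unfolding XX_def by (simp add: sum.distrib[symmetric] algebra_simps)
  also have "(\<Sum>u\<in>V. \<Sum>v\<in>V. D u * Om u v) = ZZ"
    unfolding ZZ_def by (rule sum.swap)
  also have "(\<Sum>u\<in>V. \<Sum>v\<in>V. D v * Om u v) = ZZ"
    unfolding ZZ_def by (simp add: Om_sym)
  finally show ?thesis by simp
qed

lemma B1: "(\<Sum>u\<in>V. \<Sum>v\<in>V. (2 * D u + 2 * D v) * (2/3 * Om u v)) = 4/3 * XX"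
  unfolding XX_def sum_distrib_left by (intro sum.cong refl) (simp add: algebra_simps)

lemma B2: "(\<Sum>u\<in>V. \<Sum>e\<in>E. (2 * D u + 2) * Ce u e)
   = 2/3 * (YY + ZZ) + (4 * real (card E) + 2 * real (card V)) * (real (card E) / 2 - SP / 12)"
proof -
  define A where "A u = (\<Sum>p\<in>V. D p * Om p u)" for u
  have s1: "(\<Sum>e\<in>E. Ce u e) = A u / 3 + (real (card E) / 2 - SP / 12)" for u
  proof -
    have "(\<Sum>e\<in>E. Ce u e) = (\<Sum>e\<in>E. \<Sum>p\<in>e. Om p u) / 3 - SP / 12 + real (card E) / 2"
      unfolding Ce_def SP_def by (simp add: sum.distrib sum_subtractf sum_divide_distrib)
    also have "(\<Sum>e\<in>E. \<Sum>p\<in>e. Om p u) = A u" unfolding A_def by (rule DCD)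
    finally show ?thesis by simp
  qed
  have "(\<Sum>u\<in>V. \<Sum>e\<in>E. (2 * D u + 2) * Ce u e) = (\<Sum>u\<in>V. (2 * D u + 2) * (A u / 3 + (real (card E) / 2 - SP / 12)))"
    by (simp add: sum_distrib_left[symmetric] s1)
  also have "\<dots> = (\<Sum>u\<in>V. 2/3 * (D u * A u) + 2/3 * A u + (2 * D u + 2) * (real (card E) / 2 - SP / 12))"
    by (intro sum.cong refl) (simp add: algebra_simps)
  also have "\<dots> = 2/3 * (\<Sum>u\<in>V. D u * A u) + 2/3 * (\<Sum>u\<in>V. A u)
       + (\<Sum>u\<in>V. 2 * D u + 2) * (real (card E) / 2 - SP / 12)"
    by (simp only: sum.distrib sum_distrib_left[symmetric] sum_distrib_right[symmetric])
  also have "(\<Sum>u\<in>V. 2 * D u + 2) = 2 * (\<Sum>u\<in>V. D u) + 2 * real (card V)"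
    by (simp add: sum.distrib sum_distrib_left[symmetric])
  also have "2/3 * (\<Sum>u\<in>V. D u * A u) + 2/3 * (\<Sum>u\<in>V. A u) = 2/3 * ((\<Sum>u\<in>V. D u * A u) + (\<Sum>u\<in>V. A u))"
    by (simp add: algebra_simps)
  also have "(\<Sum>u\<in>V. D u * A u) = YY"
    unfolding A_def YY_def sum_distrib_left by (intro sum.cong refl) (simp add: Om_sym algebra_simps)
  also have "(\<Sum>u\<in>V. A u) = ZZ" unfolding A_def ZZ_def ..
  finally show ?thesis by (simp add: sumD)
qed

lemma B3: "(\<Sum>e\<in>E. \<Sum>v\<in>V. (2 + 2 * D v) * Ce v e) = (\<Sum>u\<in>V. \<Sum>e\<in>E. (2 * D u + 2) * Ce u e)"
  by (subst sum.swap) (simp add: add.commute)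

lemma WY: "(\<Sum>e\<in>E. \<Sum>f\<in>E. \<Sum>p\<in>e. \<Sum>q\<in>f. Om p q) = YY"
proof -
  have "(\<Sum>e\<in>E. \<Sum>f\<in>E. \<Sum>p\<in>e. \<Sum>q\<in>f. Om p q) = (\<Sum>e\<in>E. \<Sum>p\<in>e. \<Sum>f\<in>E. \<Sum>q\<in>f. Om p q)"
    by (intro sum.cong refl) (rule sum.swap)
  also have "\<dots> = (\<Sum>e\<in>E. \<Sum>p\<in>e. \<Sum>q\<in>V. D q * Om p q)"
    by (intro sum.cong refl) (rule DCD)
  also have "\<dots> = (\<Sum>p\<in>V. D p * (\<Sum>q\<in>V. D q * Om p q))" by (rule DCD)
  also have "\<dots> = YY" unfolding YY_def sum_distrib_left by (intro sum.cong refl) (simp add: algebra_simps)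
  finally show ?thesis .
qed

lemma B4: "(\<Sum>e\<in>E. \<Sum>f\<in>E. 4 * Ne e f) = 2/3 * YY - 2/3 * real (card E) * SP + 4 * (real (card E) * real (card E) - real (card E))"
proof -
  have c: "(\<Sum>f\<in>E. (if e = f then 0 else (1::real))) = real (card E) - 1" if "e \<in> E" for e
  proof -
    have "(\<Sum>f\<in>E. (if e = f then 0 else (1::real))) = (\<Sum>f\<in>E. 1 - (if e = f then 1 else 0))"
      by (intro sum.cong refl) simp
    also have "\<dots> = real (card E) - 1" using that finE by (simp add: sum_subtractf)
    finally show ?thesis .
  qed
  have "(\<Sum>e\<in>E. \<Sum>f\<in>E. 4 * Ne e f) = 4 * ((\<Sum>e\<in>E. \<Sum>f\<in>E. \<Sum>p\<in>e. \<Sum>q\<in>f. Om p q) / 6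
      - (\<Sum>e\<in>E. \<Sum>f\<in>E. Pe e + Pe f) / 12 + (\<Sum>e\<in>E. \<Sum>f\<in>E. (if e = f then 0 else (1::real))))"
  proof -
    have "(\<Sum>e\<in>E. \<Sum>f\<in>E. 4 * Ne e f) = 4 * (\<Sum>e\<in>E. \<Sum>f\<in>E. Ne e f)" by (simp add: sum_distrib_left)
    also have "(\<Sum>e\<in>E. \<Sum>f\<in>E. Ne e f) = (\<Sum>e\<in>E. \<Sum>f\<in>E. \<Sum>p\<in>e. \<Sum>q\<in>f. Om p q) / 6
      - (\<Sum>e\<in>E. \<Sum>f\<in>E. Pe e + Pe f) / 12 + (\<Sum>e\<in>E. \<Sum>f\<in>E. (if e = f then 0 else (1::real)))"
      unfolding Ne_def by (simp only: sum.distrib sum_subtractf sum_divide_distrib add_divide_distrib)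
    finally show ?thesis .
  qed
  also have "(\<Sum>e\<in>E. \<Sum>f\<in>E. Pe e + Pe f) = 2 * real (card E) * SP"
    unfolding SP_def by (simp add: sum.distrib sum_distrib_left[symmetric] sum_distrib_right[symmetric])
  also have "(\<Sum>e\<in>E. \<Sum>f\<in>E. (if e = f then 0 else (1::real))) = (\<Sum>e\<in>E. real (card E) - 1)"
    by (intro sum.cong refl) (rule c)
  finally show ?thesis by (simp add: WY algebra_simps)
qed

lemma final: "Rplus VT ET = 2 * Rplus V E + 2 * Rstar V E
           + (12 * real (card E)^2 - real (card E) * real (card V) - real (card V)^2
              - 2 * real (card E) + real (card V)) / 3"
proof -
  have sp: "SP = 2 * (real (card V) - 1)" unfolding SP_def Pe_def by (rule Foster)
  have "2 * Rplus VT ET = 4/3 * XX + 2 * (2/3 * (YY + ZZ) + (4 * real (card E) + 2 * real (card V)) * (real (card E) / 2 - SP / 12))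
     + (2/3 * YY - 2/3 * real (card E) * SP + 4 * (real (card E) * real (card E) - real (card E)))"
    using total B1 B2 B3 B4 by simp
  moreover have "Rplus V E = XX / 2" using RG XX_def by simp
  moreover have "Rstar V E = YY / 2" using RS YY_def by simp
  ultimately show ?thesis using XZ sp by (simp add: field_simps power2_eq_square)
qed

end


theorem theorem4p4:
  fixes V :: "'a set" and E :: "'a set set"
  assumes "simple_graph V E" and "graph_connected V E" and "card V \<ge> 2"
  shows "Rplus (tri_V V E) (tri_E V E) =
           2 * Rplus V E + 2 * Rstar V E
           + (12 * real (card E)^2 - real (card E) * real (card V) - real (card V)^2
              - 2 * real (card E) + real (card V)) / 3"
proof -
  have "V \<noteq> {}" using assms(3) by auto
  then obtain r where r: "r \<in> V" by blast
  have finV: "finite V" using sg_finite[OF assms(1)] .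
  define g where "g p = (SOME x. \<forall>v\<in>V. lap V E x v = (if v = p then 1 else 0) - (if v = r then 1 else 0))" for p
  have gp: "lap V E (g p) v = (if v = p then 1 else 0) - (if v = r then 1 else 0)"
    if p: "p \<in> V" and v: "v \<in> V" for p v
  proof -
    have s: "(\<Sum>v\<in>V. (if v = p then 1 else 0) - (if v = r then 1 else (0::real))) = 0"
      using finV p r by (simp add: sum_subtractf)
    have "\<exists>x. \<forall>v\<in>V. lap V E x v = (if v = p then 1 else 0) - (if v = r then 1 else 0)"
      by (rule exists_sol[OF assms(1,2) s])
    then have "\<forall>v\<in>V. lap V E (g p) v = (if v = p then 1 else 0) - (if v = r then 1 else 0)"
      unfolding g_def by (rule someI_ex)
    then show ?thesis using v by blast
  qed
  interpret rsetup V E r g using assms(1,2) r gp by unfold_locales auto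
  show ?thesis by (rule final)
qed

end
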